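(* Let $\mathcal A$ be an algebra over a field $k$ and let $S$ be a commutative, associative, unital $k$-algebra. Then $$\mathcal D(\mathcal A\otimes S)=\mathcal D_S(\mathcal A\otimes S)\oplus\mathcal D_{\mathcal A\otimes 1}(\mathcal A\otimes S),$$ a direct sum of vector spaces.
   Context: An algebra over $k$ is a $k$-vector space with a bilinear product (not necessarily associative). $\mathcal D(\mathcal B)$ denotes the Lie algebra of derivations of an algebra $\mathcal B$. The algebra $\mathcal A\otimes S$ has product $(a\otimes s)(a'\otimes s')=aa'\otimes ss'$ and is an $S$-bimodule via $s'\cdot(a\otimes s)=(a\otimes s)\cdot s'=a\otimes ss'$. $\mathcal D_S(\mathcal A\otimes S)$ is the set of $d\in\mathcal D(\mathcal A\otimes S)$ with $d(a\otimes ss')=s'd(a\otimes s)$ for all $a\in\mathcal A$, $s,s'\in S$. $\mathcal D_{\mathcal A\otimes 1}(\mathcal A\otimes S)=\{\delta\in\mathcal D(\mathcal A\otimes S)\mid \delta(\mathcal A\otimes 1)=0\}$. *)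

theory Defs
  imports Complex_Main "HOL-Library.Function_Algebras"
begin

definition derivations ::
  "'t set \<Rightarrow> ('t \<Rightarrow> 't \<Rightarrow> 't) \<Rightarrow> ('k \<Rightarrow> 't \<Rightarrow> 't) \<Rightarrow> ('t \<Rightarrow> 't \<Rightarrow> 't) \<Rightarrow> ('t \<Rightarrow> 't) set" where
  "derivations T add scale mul =
     {d. (\<forall>X\<in>T. d X \<in> T)
       \<and> (\<forall>X\<in>T. \<forall>Y\<in>T. d (add X Y) = add (d X) (d Y))
       \<and> (\<forall>c. \<forall>X\<in>T. d (scale c X) = scale c (d X))
       \<and> (\<forall>X\<in>T. \<forall>Y\<in>T. d (mul X Y) = add (mul (d X) Y) (mul X (d Y)))}"

section \<open>The tensor product A \<otimes>_k S, constructed as the free k-vector space on A \<times> S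
  (finitely supported functions) modulo the bilinearity relations\<close>

definition fsupp :: "('x \<Rightarrow> 'k::zero) set" where
  "fsupp = {f. finite {p. f p \<noteq> 0}}"

definition fdelta :: "'x \<Rightarrow> 'x \<Rightarrow> 'k::{zero,one}" where
  "fdelta p = (\<lambda>q. if q = p then 1 else 0)"

definition fscale :: "'k::times \<Rightarrow> ('x \<Rightarrow> 'k) \<Rightarrow> 'x \<Rightarrow> 'k" where
  "fscale c f = (\<lambda>p. c * f p)"

definition tens_rels ::
  "('k::field \<Rightarrow> 'a::ab_group_add \<Rightarrow> 'a) \<Rightarrow> ('k \<Rightarrow> 's::ab_group_add \<Rightarrow> 's) \<Rightarrow> ('a \<times> 's \<Rightarrow> 'k) set" where
  "tens_rels sA sS =
     {fdelta (a + a', s) - fdelta (a, s) - fdelta (a', s) | a a' s. True}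
   \<union> {fdelta (a, s + s') - fdelta (a, s) - fdelta (a, s') | a s s'. True}
   \<union> {fdelta (sA c a, s) - fscale c (fdelta (a, s)) | c a s. True}
   \<union> {fdelta (a, sS c s) - fscale c (fdelta (a, s)) | c a s. True}"

text \<open>The k-linear span of the relations (the zero of the tensor product).\<close>
definition tens_null ::
  "('k::field \<Rightarrow> 'a::ab_group_add \<Rightarrow> 'a) \<Rightarrow> ('k \<Rightarrow> 's::ab_group_add \<Rightarrow> 's) \<Rightarrow> ('a \<times> 's \<Rightarrow> 'k) set" where
  "tens_null sA sS = {(\<Sum>v\<in>t. fscale (r v) v) | t r. finite t \<and> t \<subseteq> tens_rels sA sS}"

text \<open>Elements of the tensor product are cosets of the null subspace.\<close>
definition tcls ::
  "('k::field \<Rightarrow> 'a::ab_group_add \<Rightarrow> 'a) \<Rightarrow> ('k \<Rightarrow> 's::ab_group_add \<Rightarrow> 's) \<Rightarrow> ('a \<times> 's \<Rightarrow> 'k) \<Rightarrow> ('a \<times> 's \<Rightarrow> 'k) set" where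
  "tcls sA sS f = {g. g - f \<in> tens_null sA sS}"

definition tens_carrier ::
  "('k::field \<Rightarrow> 'a::ab_group_add \<Rightarrow> 'a) \<Rightarrow> ('k \<Rightarrow> 's::ab_group_add \<Rightarrow> 's) \<Rightarrow> ('a \<times> 's \<Rightarrow> 'k) set set" where
  "tens_carrier sA sS = tcls sA sS ` fsupp"

definition tens ::
  "('k::field \<Rightarrow> 'a::ab_group_add \<Rightarrow> 'a) \<Rightarrow> ('k \<Rightarrow> 's::ab_group_add \<Rightarrow> 's) \<Rightarrow> 'a \<Rightarrow> 's \<Rightarrow> ('a \<times> 's \<Rightarrow> 'k) set" where
  "tens sA sS a s = tcls sA sS (fdelta (a, s))"

definition tzero ::
  "('k::field \<Rightarrow> 'a::ab_group_add \<Rightarrow> 'a) \<Rightarrow> ('k \<Rightarrow> 's::ab_group_add \<Rightarrow> 's) \<Rightarrow> ('a \<times> 's \<Rightarrow> 'k) set" where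
  "tzero sA sS = tens_null sA sS"

definition tadd :: "('x \<Rightarrow> 'k::plus) set \<Rightarrow> ('x \<Rightarrow> 'k) set \<Rightarrow> ('x \<Rightarrow> 'k) set" where
  "tadd X Y = {x + y | x y. x \<in> X \<and> y \<in> Y}"

definition tscale ::
  "('k::field \<Rightarrow> 'a::ab_group_add \<Rightarrow> 'a) \<Rightarrow> ('k \<Rightarrow> 's::ab_group_add \<Rightarrow> 's) \<Rightarrow> 'k \<Rightarrow> ('a \<times> 's \<Rightarrow> 'k) set \<Rightarrow> ('a \<times> 's \<Rightarrow> 'k) set" where
  "tscale sA sS c X = (\<Union>x\<in>X. tcls sA sS (fscale c x))"

text \<open>Product on the free space: bilinear extension of
  (a,s)\<cdot>(a',s') = (a a', s s').\<close>
definition fmul :: "('a \<Rightarrow> 'a \<Rightarrow> 'a) \<Rightarrow> ('a \<times> 's::times \<Rightarrow> 'k::field) \<Rightarrow> ('a \<times> 's \<Rightarrow> 'k) \<Rightarrow> 'a \<times> 's \<Rightarrow> 'k" where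
  "fmul mA f g = (\<lambda>(b, t). \<Sum>(p, q) \<in> {(p, q). f p \<noteq> 0 \<and> g q \<noteq> 0 \<and> mA (fst p) (fst q) = b \<and> snd p * snd q = t}.
       f p * g q)"

definition tmul ::
  "('k::field \<Rightarrow> 'a::ab_group_add \<Rightarrow> 'a) \<Rightarrow> ('a \<Rightarrow> 'a \<Rightarrow> 'a) \<Rightarrow> ('k \<Rightarrow> 's::{ab_group_add,times} \<Rightarrow> 's) \<Rightarrow>
   ('a \<times> 's \<Rightarrow> 'k) set \<Rightarrow> ('a \<times> 's \<Rightarrow> 'k) set \<Rightarrow> ('a \<times> 's \<Rightarrow> 'k) set" where
  "tmul sA mA sS X Y = (\<Union>x\<in>X. \<Union>y\<in>Y. tcls sA sS (fmul mA x y))"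

text \<open>Right S-action on the free space: (a,s)\<cdot>s' = (a, s s'), extended linearly.\<close>
definition fsact :: "'s::times \<Rightarrow> ('a \<times> 's \<Rightarrow> 'k::field) \<Rightarrow> 'a \<times> 's \<Rightarrow> 'k" where
  "fsact s' f = (\<lambda>(b, t). \<Sum>p \<in> {p. f p \<noteq> 0 \<and> fst p = b \<and> snd p * s' = t}. f p)"

definition tsact ::
  "('k::field \<Rightarrow> 'a::ab_group_add \<Rightarrow> 'a) \<Rightarrow> ('k \<Rightarrow> 's::{ab_group_add,times} \<Rightarrow> 's) \<Rightarrow> 's \<Rightarrow>
   ('a \<times> 's \<Rightarrow> 'k) set \<Rightarrow> ('a \<times> 's \<Rightarrow> 'k) set" where
  "tsact sA sS s' X = (\<Union>x\<in>X. tcls sA sS (fsact s' x))"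

definition tens_der ::
  "('k::field \<Rightarrow> 'a::ab_group_add \<Rightarrow> 'a) \<Rightarrow> ('a \<Rightarrow> 'a \<Rightarrow> 'a) \<Rightarrow> ('k \<Rightarrow> 's::{ab_group_add,times} \<Rightarrow> 's) \<Rightarrow>
   (('a \<times> 's \<Rightarrow> 'k) set \<Rightarrow> ('a \<times> 's \<Rightarrow> 'k) set) set" where
  "tens_der sA mA sS = derivations (tens_carrier sA sS) tadd (tscale sA sS) (tmul sA mA sS)"

definition tens_der_S ::
  "('k::field \<Rightarrow> 'a::ab_group_add \<Rightarrow> 'a) \<Rightarrow> ('a \<Rightarrow> 'a \<Rightarrow> 'a) \<Rightarrow> ('k \<Rightarrow> 's::{ab_group_add,times} \<Rightarrow> 's) \<Rightarrow>
   (('a \<times> 's \<Rightarrow> 'k) set \<Rightarrow> ('a \<times> 's \<Rightarrow> 'k) set) set" where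
  "tens_der_S sA mA sS = {d \<in> tens_der sA mA sS.
     \<forall>a s s'. d (tens sA sS a (s * s')) = tsact sA sS s' (d (tens sA sS a s))}"

definition tens_der_A1 ::
  "('k::field \<Rightarrow> 'a::ab_group_add \<Rightarrow> 'a) \<Rightarrow> ('a \<Rightarrow> 'a \<Rightarrow> 'a) \<Rightarrow> ('k \<Rightarrow> 's::{ab_group_add,one,times} \<Rightarrow> 's) \<Rightarrow>
   (('a \<times> 's \<Rightarrow> 'k) set \<Rightarrow> ('a \<times> 's \<Rightarrow> 'k) set) set" where
  "tens_der_A1 sA mA sS = {d \<in> tens_der sA mA sS. \<forall>a. d (tens sA sS a 1) = tzero sA sS}"

end

theory Submission
  imports Defs
begin

lemma fscale_apply: "fscale c f p = c * f p" by (simp add: fscale_def)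
lemma fdelta_apply: "fdelta p q = (if q = p then 1 else 0)" by (simp add: fdelta_def)

interpretation fm: module "fscale :: 'k::comm_ring_1 \<Rightarrow> ('x \<Rightarrow> 'k) \<Rightarrow> ('x \<Rightarrow> 'k)"
  by unfold_locales (auto simp: fscale_def algebra_simps)

lemma fsupp_iff: "f \<in> fsupp \<longleftrightarrow> finite {p. f p \<noteq> 0}" by (simp add: fsupp_def)

lemma fsupp_subspace: "fm.subspace (fsupp :: ('x \<Rightarrow> 'k::comm_ring_1) set)"
proof (rule fm.subspaceI)
  show "0 \<in> (fsupp :: ('x \<Rightarrow> 'k) set)" by (simp add: fsupp_def)
next
  fix x y :: "'x \<Rightarrow> 'k" assume "x \<in> fsupp" "y \<in> fsupp"
  moreover have "{p. (x + y) p \<noteq> 0} \<subseteq> {p. x p \<noteq> 0} \<union> {p. y p \<noteq> 0}" by auto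
  ultimately show "x + y \<in> fsupp" by (auto simp: fsupp_iff intro: finite_subset)
next
  fix c and x :: "'x \<Rightarrow> 'k" assume "x \<in> fsupp"
  moreover have "{p. fscale c x p \<noteq> 0} \<subseteq> {p. x p \<noteq> 0}" by (auto simp: fscale_apply)
  ultimately show "fscale c x \<in> fsupp" by (auto simp: fsupp_iff intro: finite_subset)
qed

lemma fsupp_zero[simp]: "(0::'x \<Rightarrow> 'k::comm_ring_1) \<in> fsupp" using fm.subspace_0[OF fsupp_subspace] .
lemma fsupp_add: "f \<in> fsupp \<Longrightarrow> g \<in> fsupp \<Longrightarrow> f + g \<in> (fsupp :: ('x \<Rightarrow> 'k::comm_ring_1) set)"
  using fm.subspace_add[OF fsupp_subspace] .
lemma fsupp_diff: "f \<in> fsupp \<Longrightarrow> g \<in> fsupp \<Longrightarrow> f - g \<in> (fsupp :: ('x \<Rightarrow> 'k::comm_ring_1) set)"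
  using fm.subspace_diff[OF fsupp_subspace] .
lemma fsupp_uminus: "f \<in> fsupp \<Longrightarrow> - f \<in> (fsupp :: ('x \<Rightarrow> 'k::comm_ring_1) set)"
  using fm.subspace_neg[OF fsupp_subspace] .
lemma fsupp_scale: "f \<in> fsupp \<Longrightarrow> fscale c f \<in> (fsupp :: ('x \<Rightarrow> 'k::comm_ring_1) set)"
  using fm.subspace_scale[OF fsupp_subspace] .
lemma fsupp_delta[simp]: "(fdelta p :: 'x \<Rightarrow> 'k::comm_ring_1) \<in> fsupp"
proof -
  have "{q. (fdelta p :: 'x \<Rightarrow> 'k) q \<noteq> 0} \<subseteq> {p}" by (auto simp: fdelta_apply)
  then show ?thesis by (auto simp: fsupp_iff intro: finite_subset)
qed

lemma fsupp_induct[consumes 1]: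
  fixes f :: "'x \<Rightarrow> 'k::comm_ring_1"
  assumes "f \<in> fsupp" "P 0" "\<And>c p g. g \<in> fsupp \<Longrightarrow> P g \<Longrightarrow> P (fscale c (fdelta p) + g)"
  shows "P f"
proof -
  have "finite A \<Longrightarrow> \<forall>f::'x \<Rightarrow> 'k. {p. f p \<noteq> 0} \<subseteq> A \<longrightarrow> P f" for A
  proof (induction A rule: finite_induct)
    case empty
    show ?case
    proof (intro allI impI)
      fix f :: "'x \<Rightarrow> 'k" assume "{p. f p \<noteq> 0} \<subseteq> {}"
      then have "f = 0" by (auto intro!: ext simp: fscale_apply)
      then show "P f" using assms(2) by simp
    qed
  next
    case (insert p A)
    show ?case
    proof (intro allI impI)
      fix f :: "'x \<Rightarrow> 'k" assume f: "{p. f p \<noteq> 0} \<subseteq> insert p A"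
      define g where "g = (\<lambda>q. if q = p then 0 else f q)"
      have gs: "{q. g q \<noteq> 0} \<subseteq> A" using f by (auto simp: g_def)
      then have "g \<in> fsupp" using insert(1) by (auto simp: fsupp_iff intro: finite_subset)
      moreover have "P g" using insert(3) gs by blast
      ultimately have "P (fscale (f p) (fdelta p) + g)" by (rule assms(3))
      moreover have "fscale (f p) (fdelta p) + g = f"
        by (auto intro!: ext simp: g_def fdelta_apply fscale_apply)
      ultimately show "P f" by simp
    qed
  qed
  then show ?thesis using assms(1) by (auto simp: fsupp_iff)
qed

definition flin :: "(('x \<Rightarrow> 'k::comm_ring_1) \<Rightarrow> ('y \<Rightarrow> 'k)) \<Rightarrow> bool" where
  "flin L \<longleftrightarrow> (\<forall>f\<in>fsupp. L f \<in> fsupp) \<and> (\<forall>f\<in>fsupp. \<forall>g\<in>fsupp. L (f + g) = L f + L g)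
     \<and> (\<forall>c. \<forall>f\<in>fsupp. L (fscale c f) = fscale c (L f))"

lemma flin_fsupp: "flin L \<Longrightarrow> f \<in> fsupp \<Longrightarrow> L f \<in> fsupp" by (simp add: flin_def)
lemma flin_add: "flin L \<Longrightarrow> f \<in> fsupp \<Longrightarrow> g \<in> fsupp \<Longrightarrow> L (f + g) = L f + L g" by (simp add: flin_def)
lemma flin_scale: "flin L \<Longrightarrow> f \<in> fsupp \<Longrightarrow> L (fscale c f) = fscale c (L f)" by (simp add: flin_def)
lemma flin_zero: "flin L \<Longrightarrow> L 0 = 0"
proof -
  assume "flin L"
  then have "L (fscale 0 0) = fscale 0 (L 0)" by (rule flin_scale[OF _ fsupp_zero])
  moreover have "fscale 0 (0 :: 'x \<Rightarrow> 'k::comm_ring_1) = 0" by (auto intro!: ext simp: fscale_apply)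
  moreover have "fscale 0 (L 0) = 0" by (auto intro!: ext simp: fscale_apply)
  ultimately show ?thesis by metis
qed
lemma fscale_m1: "fscale (-1) f = - (f :: 'x \<Rightarrow> 'k::comm_ring_1)" by (auto intro!: ext simp: fscale_apply)
lemma flin_uminus: "flin L \<Longrightarrow> f \<in> fsupp \<Longrightarrow> L (- f) = - L f"
  by (metis flin_scale fscale_m1)
lemma flin_diff:
  assumes "flin L" "f \<in> fsupp" "g \<in> fsupp" shows "L (f - g) = L f - L g"
proof -
  have "L (f + - g) = L f + L (- g)" using assms fsupp_uminus flin_add by blast
  also have "L (- g) = - L g" using assms flin_uminus by blast
  finally show ?thesis by (simp only: diff_conv_add_uminus)
qed

lemma flin_cong: "flin L \<Longrightarrow> (\<And>f. f \<in> fsupp \<Longrightarrow> L' f = L f) \<Longrightarrow> flin L'"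
  by (auto simp: flin_def fsupp_add fsupp_scale)
lemma flin_comp: "flin L1 \<Longrightarrow> flin L2 \<Longrightarrow> flin (\<lambda>f. L1 (L2 f))"
  by (auto simp: flin_def)
lemma flin_plus: "flin L1 \<Longrightarrow> flin L2 \<Longrightarrow> flin (\<lambda>f. L1 f + L2 f)"
  by (auto simp: flin_def fsupp_add fm.scale_right_distrib)
lemma flin_minus: "flin L1 \<Longrightarrow> flin L2 \<Longrightarrow> flin (\<lambda>f. L1 f - L2 f)"
  by (auto simp: flin_def fsupp_diff fm.scale_right_diff_distrib)

lemma flin_memI:
  assumes "flin L" "fm.subspace V" "\<And>p. L (fdelta p) \<in> V" "f \<in> fsupp"
  shows "L f \<in> V"
  using assms(4)
proof (induction rule: fsupp_induct)
  case 1 then show ?case using flin_zero[OF assms(1)] fm.subspace_0[OF assms(2)] by metis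
next
  case (2 c p g)
  have "L (fscale c (fdelta p) + g) = fscale c (L (fdelta p)) + L g"
    using assms(1) 2(1) by (metis flin_add flin_scale fsupp_scale fsupp_delta)
  then show ?case using assms 2 by (metis fm.subspace_add fm.subspace_scale)
qed

lemma flin_eqI:
  assumes "flin L1" "flin L2" "\<And>p. L1 (fdelta p) = L2 (fdelta p)" "f \<in> fsupp"
  shows "L1 f = L2 f"
proof -
  have "(\<lambda>f. L1 f - L2 f) f \<in> {0}"
    by (rule flin_memI[OF flin_minus[OF assms(1,2)]]) (auto simp: assms)
  then show ?thesis by simp
qed

lemma flin_span:
  assumes "flin L" "S \<subseteq> fsupp" "\<And>v. v \<in> S \<Longrightarrow> L v \<in> fm.span T" "v \<in> fm.span S"
  shows "L v \<in> fm.span T"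
proof -
  have "v \<in> fsupp \<and> L v \<in> fm.span T" using assms(4)
  proof (induction rule: fm.span_induct_alt)
    case base then show ?case using flin_zero[OF assms(1)] fsupp_zero fm.span_zero by metis
  next
    case (step c x y)
    then have "x \<in> fsupp" using assms(2) by auto
    then have "L (fscale c x + y) = fscale c (L x) + L y"
      using assms(1) step by (metis flin_add flin_scale fsupp_scale)
    then show ?case using step assms \<open>x \<in> fsupp\<close>
      by (metis fm.span_add fm.span_scale fsupp_add fsupp_scale)
  qed
  then show ?thesis by simp
qed


definition lext :: "('x \<Rightarrow> 'y \<Rightarrow> 'k::comm_ring_1) \<Rightarrow> ('x \<Rightarrow> 'k) \<Rightarrow> 'y \<Rightarrow> 'k" where
  "lext h f = (\<lambda>y. \<Sum>p\<in>{p. f p \<noteq> 0}. f p * h p y)"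

lemma lext_superset:
  assumes "finite A" "{p. f p \<noteq> 0} \<subseteq> A"
  shows "lext h f = (\<lambda>y. \<Sum>p\<in>A. f p * h p y)"
  unfolding lext_def using assms by (auto intro!: ext sum.mono_neutral_left)

lemma lext_delta: "lext h (fdelta p) = h p"
proof -
  have "lext h (fdelta p) = (\<lambda>y. \<Sum>q\<in>{p}. fdelta p q * h q y)"
    by (rule lext_superset) (auto simp: fdelta_apply)
  then show ?thesis by (simp add: fdelta_apply)
qed

lemma flin_lext:
  fixes h :: "'x \<Rightarrow> 'y \<Rightarrow> 'k::comm_ring_1"
  assumes h: "\<And>p. h p \<in> fsupp"
  shows "flin (lext h)"
  unfolding flin_def
proof (intro conjI ballI allI)
  fix f :: "'x \<Rightarrow> 'k" assume f: "f \<in> fsupp"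
  have "{y. lext h f y \<noteq> 0} \<subseteq> (\<Union>p\<in>{p. f p \<noteq> 0}. {y. h p y \<noteq> 0})"
  proof
    fix y assume "y \<in> {y. lext h f y \<noteq> 0}"
    then have "(\<Sum>p\<in>{p. f p \<noteq> 0}. f p * h p y) \<noteq> 0" by (simp add: lext_def)
    then obtain p where "p \<in> {p. f p \<noteq> 0}" "f p * h p y \<noteq> 0" by (meson sum.neutral)
    then show "y \<in> (\<Union>p\<in>{p. f p \<noteq> 0}. {y. h p y \<noteq> 0})" by auto
  qed
  moreover have "finite (\<Union>p\<in>{p. f p \<noteq> 0}. {y. h p y \<noteq> 0})"
    using f h by (auto simp: fsupp_iff)
  ultimately show "lext h f \<in> fsupp" by (auto simp: fsupp_iff intro: finite_subset)
next
  fix f g :: "'x \<Rightarrow> 'k" assume f: "f \<in> fsupp" and g: "g \<in> fsupp"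
  define A where "A = {p. f p \<noteq> 0} \<union> {p. g p \<noteq> 0}"
  have A: "finite A" using f g by (simp add: A_def fsupp_iff)
  have "lext h (f + g) = (\<lambda>y. \<Sum>p\<in>A. (f + g) p * h p y)"
    by (rule lext_superset[OF A]) (auto simp: A_def)
  moreover have "lext h f = (\<lambda>y. \<Sum>p\<in>A. f p * h p y)"
    by (rule lext_superset[OF A]) (auto simp: A_def)
  moreover have "lext h g = (\<lambda>y. \<Sum>p\<in>A. g p * h p y)"
    by (rule lext_superset[OF A]) (auto simp: A_def)
  ultimately show "lext h (f + g) = lext h f + lext h g"
    by (auto intro!: ext simp: distrib_right sum.distrib)
next
  fix c and f :: "'x \<Rightarrow> 'k" assume f: "f \<in> fsupp"
  define A where "A = {p. f p \<noteq> 0}"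
  have A: "finite A" using f by (simp add: A_def fsupp_iff)
  have "lext h (fscale c f) = (\<lambda>y. \<Sum>p\<in>A. fscale c f p * h p y)"
    by (rule lext_superset[OF A]) (auto simp: A_def fscale_apply)
  moreover have "lext h f = (\<lambda>y. \<Sum>p\<in>A. f p * h p y)"
    by (rule lext_superset[OF A]) (auto simp: A_def)
  ultimately show "lext h (fscale c f) = fscale c (lext h f)"
    by (auto intro!: ext simp: fscale_apply sum_distrib_left mult.assoc)
qed

lemma fsact_lext:
  fixes f :: "'a \<times> 's::comm_ring_1 \<Rightarrow> 'k::field"
  assumes f: "f \<in> fsupp"
  shows "fsact s f = lext (\<lambda>p. fdelta (fst p, snd p * s)) f"
proof (rule ext, clarify)
  fix b :: 'a and t :: 's
  have fin: "finite {p. f p \<noteq> 0}" using f by (simp add: fsupp_iff)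
  have "fsact s f (b, t) = (\<Sum>p\<in>{p \<in> {p. f p \<noteq> 0}. fst p = b \<and> snd p * s = t}. f p)"
    unfolding fsact_def by (simp add: conj_assoc)
  also have "\<dots> = (\<Sum>p\<in>{p. f p \<noteq> 0}. if fst p = b \<and> snd p * s = t then f p else 0)"
    by (rule sum.inter_filter[OF fin])
  also have "\<dots> = lext (\<lambda>p. fdelta (fst p, snd p * s)) f (b, t)"
    unfolding lext_def by (auto intro!: sum.cong simp: fdelta_apply)
  finally show "fsact s f (b, t) = lext (\<lambda>p. fdelta (fst p, snd p * s)) f (b, t)" .
qed

lemma fmul_lext:
  fixes f g :: "'a \<times> 's::comm_ring_1 \<Rightarrow> 'k::field"
  assumes f: "f \<in> fsupp" and g: "g \<in> fsupp"
  shows "fmul mA f g = lext (\<lambda>p. lext (\<lambda>q. fdelta (mA (fst p) (fst q), snd p * snd q)) g) f"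
proof (rule ext, clarify)
  fix b :: 'a and t :: 's
  let ?F = "{p. f p \<noteq> 0}" and ?G = "{q. g q \<noteq> 0}"
  have finF: "finite ?F" using f by (simp add: fsupp_iff)
  have finG: "finite ?G" using g by (simp add: fsupp_iff)
  let ?C = "\<lambda>pq. mA (fst (fst pq)) (fst (snd pq)) = b \<and> snd (fst pq) * snd (snd pq) = t"
  have "fmul mA f g (b, t) = (\<Sum>pq\<in>{pq \<in> ?F \<times> ?G. ?C pq}. f (fst pq) * g (snd pq))"
    unfolding fmul_def by (auto intro!: sum.cong simp: case_prod_beta)
  also have "\<dots> = (\<Sum>pq\<in>?F \<times> ?G. if ?C pq then f (fst pq) * g (snd pq) else 0)"
    by (rule sum.inter_filter) (use finF finG in auto)
  also have "\<dots> = (\<Sum>p\<in>?F. \<Sum>q\<in>?G. if ?C (p, q) then f p * g q else 0)"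
    by (subst sum.cartesian_product) (simp add: case_prod_beta)
  also have "\<dots> = lext (\<lambda>p. lext (\<lambda>q. fdelta (mA (fst p) (fst q), snd p * snd q)) g) f (b, t)"
    unfolding lext_def by (auto intro!: sum.cong simp: fdelta_apply sum_distrib_left)
  finally show "fmul mA f g (b, t) = lext (\<lambda>p. lext (\<lambda>q. fdelta (mA (fst p) (fst q), snd p * snd q)) g) f (b, t)" .
qed

lemma fmul_lext2:
  fixes f g :: "'a \<times> 's::comm_ring_1 \<Rightarrow> 'k::field"
  assumes f: "f \<in> fsupp" and g: "g \<in> fsupp"
  shows "fmul mA f g = lext (\<lambda>q. lext (\<lambda>p. fdelta (mA (fst p) (fst q), snd p * snd q)) f) g"
proof -
  have "fmul mA f g = lext (\<lambda>p. lext (\<lambda>q. fdelta (mA (fst p) (fst q), snd p * snd q)) g) f"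
    by (rule fmul_lext[OF f g])
  also have "\<dots> = lext (\<lambda>q. lext (\<lambda>p. fdelta (mA (fst p) (fst q), snd p * snd q)) f) g"
    unfolding lext_def
    apply (rule ext)
    apply (simp add: sum_distrib_left)
    apply (rule sum.swap[THEN trans])
    apply (simp add: mult_ac)
    done
  finally show ?thesis .
qed


lemma flin_d3: "flin L \<Longrightarrow> L (fdelta p - fdelta q - fdelta r) = L (fdelta p) - L (fdelta q) - L (fdelta r)"
  by (metis flin_diff fsupp_diff fsupp_delta)
lemma flin_ds: "flin L \<Longrightarrow> L (fdelta p - fscale c (fdelta q)) = L (fdelta p) - fscale c (L (fdelta q))"
  by (metis flin_diff fsupp_scale flin_scale fsupp_delta)

lemma UN_const: "x0 \<in> X \<Longrightarrow> (\<And>x. x \<in> X \<Longrightarrow> F x = C) \<Longrightarrow> (\<Union>x\<in>X. F x) = C"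
  by auto

lemma flin_fsact: "flin (fsact s :: ('a \<times> 's::comm_ring_1 \<Rightarrow> 'k::field) \<Rightarrow> _)"
  by (rule flin_cong[OF flin_lext[of "\<lambda>p. fdelta (fst p, snd p * s)"]]) (simp_all add: fsact_lext)

lemma fsact_delta: "fsact s (fdelta (a, t) :: 'a \<times> 's::comm_ring_1 \<Rightarrow> 'k::field) = fdelta (a, t * s)"
  by (simp add: fsact_lext lext_delta)

lemma flin_fmul_left:
  fixes g :: "'a \<times> 's::comm_ring_1 \<Rightarrow> 'k::field"
  assumes g: "g \<in> fsupp"
  shows "flin (\<lambda>f. fmul mA f g)"
proof (rule flin_cong[OF flin_lext[of "\<lambda>p. lext (\<lambda>q. fdelta (mA (fst p) (fst q), snd p * snd q)) g"]])
  show "lext (\<lambda>q. fdelta (mA (fst p) (fst q), snd p * snd q)) g \<in> fsupp" for p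
    by (rule flin_fsupp[OF flin_lext g]) simp
  show "fmul mA f g = lext (\<lambda>p. lext (\<lambda>q. fdelta (mA (fst p) (fst q), snd p * snd q)) g) f"
    if "f \<in> fsupp" for f using fmul_lext[OF that g] .
qed

lemma flin_fmul_right:
  fixes f :: "'a \<times> 's::comm_ring_1 \<Rightarrow> 'k::field"
  assumes f: "f \<in> fsupp"
  shows "flin (fmul mA f)"
proof (rule flin_cong[OF flin_lext[of "\<lambda>q. lext (\<lambda>p. fdelta (mA (fst p) (fst q), snd p * snd q)) f"]])
  show "lext (\<lambda>p. fdelta (mA (fst p) (fst q), snd p * snd q)) f \<in> fsupp" for q
    by (rule flin_fsupp[OF flin_lext f]) simp
  show "fmul mA f g = lext (\<lambda>q. lext (\<lambda>p. fdelta (mA (fst p) (fst q), snd p * snd q)) f) g"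
    if "g \<in> fsupp" for g using fmul_lext2[OF f that] .
qed

lemma fmul_delta:
  "fmul mA (fdelta (a, s)) (fdelta (b, t) :: 'a \<times> 's::comm_ring_1 \<Rightarrow> 'k::field) = fdelta (mA a b, s * t)"
  by (simp add: fmul_lext lext_delta)

lemma flin_id: "flin (\<lambda>f. f)" by (simp add: flin_def)

lemma fsact_fsact:
  fixes f :: "'a \<times> 's::comm_ring_1 \<Rightarrow> 'k::field"
  assumes "f \<in> fsupp"
  shows "fsact s' (fsact s f) = fsact (s * s') f"
proof (rule flin_eqI[OF flin_comp[OF flin_fsact flin_fsact] flin_fsact _ assms])
  fix p :: "'a \<times> 's" obtain a t where "p = (a, t)" by fastforce
  then show "fsact s' (fsact s (fdelta p :: 'a \<times> 's \<Rightarrow> 'k)) = fsact (s * s') (fdelta p)"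
    by (simp add: fsact_delta mult.assoc)
qed

lemma fsact_one:
  fixes f :: "'a \<times> 's::comm_ring_1 \<Rightarrow> 'k::field"
  assumes "f \<in> fsupp"
  shows "fsact 1 f = f"
proof (rule flin_eqI[OF flin_fsact flin_id _ assms])
  fix p :: "'a \<times> 's" obtain a t where "p = (a, t)" by fastforce
  then show "fsact 1 (fdelta p :: 'a \<times> 's \<Rightarrow> 'k) = fdelta p"
    by (simp add: fsact_delta)
qed

locale tsetup =
  fixes sA :: "'k::field \<Rightarrow> 'a::ab_group_add \<Rightarrow> 'a"
    and mA :: "'a \<Rightarrow> 'a \<Rightarrow> 'a"
    and sS :: "'k \<Rightarrow> 's::comm_ring_1 \<Rightarrow> 's"
  assumes mA_add_left: "\<And>x y z. mA (x + y) z = mA x z + mA y z"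
    and mA_add_right: "\<And>x y z. mA x (y + z) = mA x y + mA x z"
    and mA_scale_left: "\<And>c x y. mA (sA c x) y = sA c (mA x y)"
    and mA_scale_right: "\<And>c x y. mA x (sA c y) = sA c (mA x y)"
    and S_alg: "\<And>c x y. sS c (x * y) = sS c x * y"
begin

abbreviation N where "N \<equiv> tens_null sA sS"
abbreviation cl where "cl \<equiv> tcls sA sS"
abbreviation T where "T \<equiv> tens_carrier sA sS"
abbreviation R where "R \<equiv> tens_rels sA sS"

lemma N_span: "N = fm.span R" by (simp add: tens_null_def fm.span_explicit)

lemma R1: "fdelta (a + a', s) - fdelta (a, s) - fdelta (a', s) \<in> R" unfolding tens_rels_def by blast
lemma R2: "fdelta (a, s + s') - fdelta (a, s) - fdelta (a, s') \<in> R" unfolding tens_rels_def by blast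
lemma R3: "fdelta (sA c a, s) - fscale c (fdelta (a, s)) \<in> R" unfolding tens_rels_def by blast
lemma R4: "fdelta (a, sS c s) - fscale c (fdelta (a, s)) \<in> R" unfolding tens_rels_def by blast

lemma R_cases:
  assumes "v \<in> R"
  obtains (r1) a a' s where "v = fdelta (a + a', s) - fdelta (a, s) - fdelta (a', s)"
  | (r2) a s s' where "v = fdelta (a, s + s') - fdelta (a, s) - fdelta (a, s')"
  | (r3) c a s where "v = fdelta (sA c a, s) - fscale c (fdelta (a, s))"
  | (r4) c a s where "v = fdelta (a, sS c s) - fscale c (fdelta (a, s))"
  using assms unfolding tens_rels_def by blast

lemma R_fsupp: "R \<subseteq> fsupp"
proof
  fix v assume "v \<in> R"
  then show "v \<in> fsupp"
    by (cases rule: R_cases) (auto intro!: fsupp_diff fsupp_scale)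
qed

lemma N_fsupp: "N \<subseteq> fsupp"
  using fm.span_minimal[OF R_fsupp fsupp_subspace] N_span by simp

lemma N_zero: "0 \<in> N" using N_span fm.span_zero by metis
lemma N_add: "x \<in> N \<Longrightarrow> y \<in> N \<Longrightarrow> x + y \<in> N" using N_span fm.span_add by metis
lemma N_diff: "x \<in> N \<Longrightarrow> y \<in> N \<Longrightarrow> x - y \<in> N" using N_span fm.span_diff by metis
lemma N_scale: "x \<in> N \<Longrightarrow> fscale c x \<in> N" using N_span fm.span_scale by metis
lemma N_R: "x \<in> R \<Longrightarrow> x \<in> N" using N_span fm.span_base by metis
lemma N_subspace: "fm.subspace N" using N_span fm.subspace_span by metis

lemma cl_mem: "g \<in> cl f \<longleftrightarrow> g - f \<in> N" by (simp add: tcls_def)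
lemma cl_self: "f \<in> cl f" by (simp add: cl_mem N_zero)
lemma cl_eqI: "f - g \<in> N \<Longrightarrow> cl f = cl g"
proof -
  assume fg: "f - g \<in> N"
  have "h - f \<in> N \<longleftrightarrow> h - g \<in> N" for h
  proof
    assume "h - f \<in> N" then have "(h - f) + (f - g) \<in> N" using fg N_add by blast
    then show "h - g \<in> N" by (simp add: algebra_simps)
  next
    assume "h - g \<in> N" then have "(h - g) - (f - g) \<in> N" using fg N_diff by blast
    then show "h - f \<in> N" by (simp add: algebra_simps)
  qed
  then show ?thesis by (auto simp: cl_mem)
qed
lemma cl_eq_iff: "cl f = cl g \<longleftrightarrow> f - g \<in> N"
  using cl_eqI cl_self cl_mem by metis

lemma T_iff: "X \<in> T \<longleftrightarrow> (\<exists>f\<in>fsupp. X = cl f)" by (auto simp: tens_carrier_def)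
lemma cl_in_T: "f \<in> fsupp \<Longrightarrow> cl f \<in> T" by (auto simp: T_iff)
lemma cl_fsupp: "f \<in> fsupp \<Longrightarrow> g \<in> cl f \<Longrightarrow> g \<in> fsupp"
proof -
  assume f: "f \<in> fsupp" and "g \<in> cl f"
  then have "g - f \<in> fsupp" using N_fsupp cl_mem by blast
  then have "(g - f) + f \<in> fsupp" using f fsupp_add by blast
  then show ?thesis by simp
qed

lemma tadd_cl: "tadd (cl f) (cl g) = cl (f + g)"
proof
  show "tadd (cl f) (cl g) \<subseteq> cl (f + g)"
  proof
    fix z assume "z \<in> tadd (cl f) (cl g)"
    then obtain x y where "z = x + y" "x - f \<in> N" "y - g \<in> N" by (auto simp: tadd_def cl_mem)
    then show "z \<in> cl (f + g)" using N_add[of "x - f" "y - g"] by (simp add: cl_mem algebra_simps)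
  qed
next
  show "cl (f + g) \<subseteq> tadd (cl f) (cl g)"
  proof
    fix z assume "z \<in> cl (f + g)"
    then have "z - g \<in> cl f" "g \<in> cl g" by (simp_all add: cl_mem cl_self algebra_simps N_zero)
    moreover have "z = (z - g) + g" by simp
    ultimately show "z \<in> tadd (cl f) (cl g)" unfolding tadd_def by blast
  qed
qed

lemma fscale_diff: "fscale c x - fscale c y = fscale c (x - y :: 'x \<Rightarrow> 'kk::comm_ring_1)"
  by (auto intro!: ext simp: fscale_apply algebra_simps)

lemma tscale_cl: "tscale sA sS c (cl f) = cl (fscale c f)"
  unfolding tscale_def
proof (rule UN_const[OF cl_self])
  fix x assume "x \<in> cl f"
  then have "x - f \<in> N" by (simp add: cl_mem)
  then have "fscale c x - fscale c f \<in> N" using N_scale fscale_diff by metis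
  then show "cl (fscale c x) = cl (fscale c f)" by (rule cl_eqI)
qed

lemma tzero_cl: "tzero sA sS = cl 0" by (simp add: tzero_def tcls_def)
lemma tens_cl: "tens sA sS a s = cl (fdelta (a, s))" by (simp add: tens_def)


lemma fsact_R: "v \<in> R \<Longrightarrow> fsact s v \<in> N"
proof -
  assume "v \<in> R"
  then show ?thesis
  proof (cases rule: R_cases)
    case (r1 a a' t)
    then show ?thesis using N_R[OF R1[of a a' "t * s"]]
      by (simp add: flin_d3[OF flin_fsact] fsact_delta)
  next
    case (r2 a t t')
    then show ?thesis using N_R[OF R2[of a "t * s" "t' * s"]]
      by (simp add: flin_d3[OF flin_fsact] fsact_delta distrib_right)
  next
    case (r3 c a t)
    then show ?thesis using N_R[OF R3[of c a "t * s"]]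
      by (simp add: flin_ds[OF flin_fsact] fsact_delta)
  next
    case (r4 c a t)
    then show ?thesis using N_R[OF R4[of a c "t * s"]]
      by (simp add: flin_ds[OF flin_fsact] fsact_delta S_alg)
  qed
qed

lemma fsact_N: "v \<in> N \<Longrightarrow> fsact s v \<in> N"
  using flin_span[OF flin_fsact R_fsupp, of _ R v] fsact_R N_span by metis

lemma tsact_cl: "f \<in> fsupp \<Longrightarrow> tsact sA sS s (cl f) = cl (fsact s f)"
  unfolding tsact_def
proof (rule UN_const[OF cl_self])
  fix x assume f: "f \<in> fsupp" and x: "x \<in> cl f"
  then have "x \<in> fsupp" by (rule cl_fsupp)
  then have "fsact s x - fsact s f = fsact s (x - f)" using f flin_diff[OF flin_fsact] by metis
  moreover have "x - f \<in> N" using x by (simp add: cl_mem)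
  ultimately have "fsact s x - fsact s f \<in> N" using fsact_N by metis
  then show "cl (fsact s x) = cl (fsact s f)" by (rule cl_eqI)
qed

lemma fmul_R_left:
  assumes v: "v \<in> R" and g: "g \<in> fsupp"
  shows "fmul mA v g \<in> N"
proof -
  have vs: "v \<in> fsupp" using v R_fsupp by blast
  have "fmul mA v (fdelta p) \<in> N" for p
  proof -
    obtain b t where p: "p = (b, t)" by fastforce
    have L: "flin (\<lambda>f. fmul mA f (fdelta (b, t)))" by (rule flin_fmul_left) simp
    from v show ?thesis
    proof (cases rule: R_cases)
      case (r1 a a' s)
      then show ?thesis using N_R[OF R1[of "mA a b" "mA a' b" "s * t"]]
        by (simp add: p flin_d3[OF L] fmul_delta mA_add_left)
    next
      case (r2 a s s')
      then show ?thesis using N_R[OF R2[of "mA a b" "s * t" "s' * t"]]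
        by (simp add: p flin_d3[OF L] fmul_delta distrib_right)
    next
      case (r3 c a s)
      then show ?thesis using N_R[OF R3[of c "mA a b" "s * t"]]
        by (simp add: p flin_ds[OF L] fmul_delta mA_scale_left)
    next
      case (r4 c a s)
      then show ?thesis using N_R[OF R4[of "mA a b" c "s * t"]]
        by (simp add: p flin_ds[OF L] fmul_delta S_alg)
    qed
  qed
  then show ?thesis by (rule flin_memI[OF flin_fmul_right[OF vs] N_subspace _ g])
qed

lemma sS_comm: "t * sS c s = sS c (t * s)"
  by (metis S_alg mult.commute)

lemma fmul_R_right:
  assumes v: "v \<in> R" and g: "g \<in> fsupp"
  shows "fmul mA g v \<in> N"
proof -
  have vs: "v \<in> fsupp" using v R_fsupp by blast
  have "fmul mA (fdelta p) v \<in> N" for p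
  proof -
    obtain b t where p: "p = (b, t)" by fastforce
    have L: "flin (fmul mA (fdelta (b, t)))" by (rule flin_fmul_right) simp
    from v show ?thesis
    proof (cases rule: R_cases)
      case (r1 a a' s)
      then show ?thesis using N_R[OF R1[of "mA b a" "mA b a'" "t * s"]]
        by (simp add: p flin_d3[OF L] fmul_delta mA_add_right)
    next
      case (r2 a s s')
      then show ?thesis using N_R[OF R2[of "mA b a" "t * s" "t * s'"]]
        by (simp add: p flin_d3[OF L] fmul_delta distrib_left)
    next
      case (r3 c a s)
      then show ?thesis using N_R[OF R3[of c "mA b a" "t * s"]]
        by (simp add: p flin_ds[OF L] fmul_delta mA_scale_right)
    next
      case (r4 c a s)
      then show ?thesis using N_R[OF R4[of "mA b a" c "t * s"]]
        by (simp add: p flin_ds[OF L] fmul_delta sS_comm)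
    qed
  qed
  then show ?thesis by (rule flin_memI[OF flin_fmul_left[OF vs] N_subspace _ g])
qed

lemma fmul_N_left:
  assumes v: "v \<in> N" and g: "g \<in> fsupp" shows "fmul mA v g \<in> N"
proof -
  have L: "flin (\<lambda>f. fmul mA f g)" by (rule flin_fmul_left[OF g])
  show ?thesis using flin_span[OF L R_fsupp, of R v] fmul_R_left[OF _ g] v unfolding N_span by blast
qed

lemma fmul_N_right:
  assumes v: "v \<in> N" and g: "g \<in> fsupp" shows "fmul mA g v \<in> N"
proof -
  have L: "flin (fmul mA g)" by (rule flin_fmul_right[OF g])
  show ?thesis using flin_span[OF L R_fsupp, of R v] fmul_R_right[OF _ g] v unfolding N_span by blast
qed

lemma tmul_cl:
  assumes f: "f \<in> fsupp" and g: "g \<in> fsupp"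
  shows "tmul sA mA sS (cl f) (cl g) = cl (fmul mA f g)"
  unfolding tmul_def
proof (rule UN_const[OF cl_self])
  fix x assume x: "x \<in> cl f"
  have xs: "x \<in> fsupp" using cl_fsupp[OF f x] .
  show "(\<Union>y\<in>cl g. cl (fmul mA x y)) = cl (fmul mA f g)"
  proof (rule UN_const[OF cl_self])
    fix y assume y: "y \<in> cl g"
    have ys: "y \<in> fsupp" using cl_fsupp[OF g y] .
    have "fmul mA x y - fmul mA f y = fmul mA (x - f) y"
      using flin_diff[OF flin_fmul_left[OF ys] xs f] by simp
    moreover have "fmul mA f y - fmul mA f g = fmul mA f (y - g)"
      using flin_diff[OF flin_fmul_right[OF f] ys g] by simp
    moreover have "x - f \<in> N" "y - g \<in> N" using x y by (simp_all add: cl_mem)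
    ultimately have "(fmul mA x y - fmul mA f y) + (fmul mA f y - fmul mA f g) \<in> N"
      using N_add fmul_N_left fmul_N_right ys f by metis
    then have "fmul mA x y - fmul mA f g \<in> N" by simp
    then show "cl (fmul mA x y) = cl (fmul mA f g)" by (rule cl_eqI)
  qed
qed


lemma fscale_zero_right: "fscale c 0 = (0 :: 'x \<Rightarrow> 'kk::comm_ring_1)"
  by (auto intro!: ext simp: fscale_apply)
lemma fscale_zero_left: "fscale 0 h = (0 :: 'x \<Rightarrow> 'kk::comm_ring_1)"
  by (auto intro!: ext simp: fscale_apply)

lemma flin_fscale: "flin (fscale c :: ('x \<Rightarrow> 'kk::comm_ring_1) \<Rightarrow> _)"
  unfolding flin_def by (auto simp: fsupp_scale fm.scale_right_distrib mult.commute)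

lemma der_T: "d \<in> tens_der sA mA sS \<Longrightarrow> X \<in> T \<Longrightarrow> d X \<in> T"
  by (simp add: tens_der_def derivations_def)
lemma der_add: "d \<in> tens_der sA mA sS \<Longrightarrow> X \<in> T \<Longrightarrow> Y \<in> T \<Longrightarrow> d (tadd X Y) = tadd (d X) (d Y)"
  by (simp add: tens_der_def derivations_def)
lemma der_scale: "d \<in> tens_der sA mA sS \<Longrightarrow> X \<in> T \<Longrightarrow> d (tscale sA sS c X) = tscale sA sS c (d X)"
  by (simp add: tens_der_def derivations_def)
lemma der_mul: "d \<in> tens_der sA mA sS \<Longrightarrow> X \<in> T \<Longrightarrow> Y \<in> T \<Longrightarrow>
    d (tmul sA mA sS X Y) = tadd (tmul sA mA sS (d X) Y) (tmul sA mA sS X (d Y))"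
  by (simp add: tens_der_def derivations_def)

lemma der_cl: 
  assumes "d \<in> tens_der sA mA sS" "f \<in> fsupp"
  obtains g where "g \<in> fsupp" "d (cl f) = cl g"
  using der_T[OF assms(1) cl_in_T[OF assms(2)]] T_iff by blast

lemma part2:
  assumes d1: "d \<in> tens_der_S sA mA sS" and d2: "d \<in> tens_der_A1 sA mA sS" and X: "X \<in> T"
  shows "d X = tzero sA sS"
proof -
  have dD: "d \<in> tens_der sA mA sS" using d1 by (simp add: tens_der_S_def)
  have dt: "d (cl (fdelta (a, s))) = cl 0" for a s
  proof -
    have S: "\<And>a s s'. d (tens sA sS a (s * s')) = tsact sA sS s' (d (tens sA sS a s))"
      using d1 by (simp add: tens_der_S_def)
    have "d (tens sA sS a s) = tsact sA sS s (d (tens sA sS a 1))"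
      using S[of a 1 s] by simp
    also have "d (tens sA sS a 1) = cl 0" using d2 by (simp add: tens_der_A1_def tzero_cl)
    finally have "d (cl (fdelta (a, s))) = cl (fsact s 0)"
      by (simp add: tens_cl tsact_cl)
    moreover have "fsact s (0 :: 'a \<times> 's \<Rightarrow> 'k) = 0" by (rule flin_zero[OF flin_fsact])
    ultimately show ?thesis by metis
  qed
  have d0: "d (cl 0) = cl 0"
  proof -
    obtain h where h: "h \<in> fsupp" "d (cl 0) = cl h" using der_cl[OF dD fsupp_zero] by blast
    have "d (cl 0) = d (tscale sA sS 0 (cl 0))" by (simp add: tscale_cl fscale_zero_right)
    also have "\<dots> = tscale sA sS 0 (d (cl 0))" by (rule der_scale[OF dD cl_in_T[OF fsupp_zero]])
    also have "\<dots> = cl 0" by (simp add: h tscale_cl fscale_zero_left)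
    finally show ?thesis .
  qed
  have "\<forall>f\<in>fsupp. d (cl f) = cl 0"
  proof
    fix f :: "'a \<times> 's \<Rightarrow> 'k" assume "f \<in> fsupp"
    then show "d (cl f) = cl 0"
    proof (induction rule: fsupp_induct)
      case 1 then show ?case by (rule d0)
    next
      case (2 c p g)
      obtain a s where p: "p = (a, s)" by fastforce
      have "cl (fscale c (fdelta p) + g) = tadd (tscale sA sS c (cl (fdelta p))) (cl g)"
        by (simp add: tadd_cl tscale_cl)
      then have "d (cl (fscale c (fdelta p) + g)) = tadd (tscale sA sS c (d (cl (fdelta p)))) (d (cl g))"
        using der_add[OF dD] der_scale[OF dD] cl_in_T 2(1) fsupp_delta by (metis tscale_cl fsupp_scale)
      also have "\<dots> = cl 0"
        unfolding p dt 2(2) tscale_cl tadd_cl fscale_zero_right by (simp only: add_0_right)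
      finally show ?case .
    qed
  qed
  then show ?thesis using X by (auto simp: T_iff tzero_cl)
qed


lemma fsact_add_N:
  assumes f: "f \<in> fsupp"
  shows "fsact (s + s') f - fsact s f - fsact s' f \<in> N"
proof -
  have L: "flin (\<lambda>f. fsact (s + s') f - fsact s f - fsact s' f)"
    by (intro flin_minus flin_fsact)
  show ?thesis
  proof (rule flin_memI[OF L N_subspace _ f])
    fix p :: "'a \<times> 's" obtain b t where p: "p = (b, t)" by fastforce
    show "fsact (s + s') (fdelta p) - fsact s (fdelta p) - fsact s' (fdelta p) \<in> N"
      using N_R[OF R2[of b "t * s" "t * s'"]] by (simp add: p fsact_delta distrib_left)
  qed
qed

lemma fsact_sS_N:
  assumes f: "f \<in> fsupp"
  shows "fsact (sS c s) f - fscale c (fsact s f) \<in> N"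
proof -
  have L: "flin (\<lambda>f. fsact (sS c s) f - fscale c (fsact s f))"
    by (intro flin_minus flin_fsact flin_comp[OF flin_fscale])
  show ?thesis
  proof (rule flin_memI[OF L N_subspace _ f])
    fix p :: "'a \<times> 's" obtain b t where p: "p = (b, t)" by fastforce
    show "fsact (sS c s) (fdelta p) - fscale c (fsact s (fdelta p)) \<in> N"
      using N_R[OF R4[of b c "t * s"]] by (simp add: p fsact_delta sS_comm)
  qed
qed

lemma fsact_fmul1:
  fixes x :: "'a \<times> 's \<Rightarrow> 'k"
  assumes x: "x \<in> fsupp"
  shows "fsact (s * t) (fmul mA x (fdelta (b, 1))) = fmul mA (fsact s x) (fdelta (b, t))"
proof -
  have L1: "flin (\<lambda>x. fsact (s * t) (fmul mA x (fdelta (b, 1))))"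
    using flin_comp[OF flin_fsact flin_fmul_left[OF fsupp_delta]] .
  have L2: "flin (\<lambda>x. fmul mA (fsact s x) (fdelta (b, t)))"
    using flin_comp[OF flin_fmul_left[OF fsupp_delta] flin_fsact] .
  show ?thesis
  proof (rule flin_eqI[OF L1 L2 _ x])
    fix p :: "'a \<times> 's" obtain c u where p: "p = (c, u)" by fastforce
    show "fsact (s * t) (fmul mA (fdelta p) (fdelta (b, 1))) = fmul mA (fsact s (fdelta p)) (fdelta (b, t))"
      by (simp add: p fsact_delta fmul_delta mult_ac)
  qed
qed

lemma fsact_fmul2:
  fixes x :: "'a \<times> 's \<Rightarrow> 'k"
  assumes x: "x \<in> fsupp"
  shows "fsact (s * t) (fmul mA (fdelta (a, 1)) x) = fmul mA (fdelta (a, s)) (fsact t x)"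
proof -
  have L1: "flin (\<lambda>x. fsact (s * t) (fmul mA (fdelta (a, 1)) x))"
    using flin_comp[OF flin_fsact flin_fmul_right[OF fsupp_delta]] .
  have L2: "flin (\<lambda>x. fmul mA (fdelta (a, s)) (fsact t x))"
    using flin_comp[OF flin_fmul_right[OF fsupp_delta] flin_fsact] .
  show ?thesis
  proof (rule flin_eqI[OF L1 L2 _ x])
    fix p :: "'a \<times> 's" obtain c u where p: "p = (c, u)" by fastforce
    show "fsact (s * t) (fmul mA (fdelta (a, 1)) (fdelta p)) = fmul mA (fdelta (a, s)) (fsact t (fdelta p))"
      by (simp add: p fsact_delta fmul_delta mult_ac)
  qed
qed

lemma part1:
  assumes dD: "d \<in> tens_der sA mA sS"
  shows "\<exists>d1\<in>tens_der_S sA mA sS. \<exists>d2\<in>tens_der_A1 sA mA sS. \<forall>X\<in>T. d X = tadd (d1 X) (d2 X)"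
proof -
  define r where "r a = (SOME h. h \<in> fsupp \<and> d (cl (fdelta (a, 1))) = cl h)" for a
  have r: "r a \<in> fsupp \<and> d (cl (fdelta (a, 1))) = cl (r a)" for a
  proof -
    obtain h where "h \<in> fsupp" "d (cl (fdelta (a, 1))) = cl h" using der_cl[OF dD fsupp_delta] by blast
    then have "h \<in> fsupp \<and> d (cl (fdelta (a, 1))) = cl h" by blast
    then show ?thesis unfolding r_def
      using someI[of "\<lambda>h. h \<in> fsupp \<and> d (cl (fdelta (a, 1))) = cl h" h] by blast
  qed
  have rs: "r a \<in> fsupp" for a using r by blast
  have rd: "d (cl (fdelta (a, 1))) = cl (r a)" for a using r by blast
  have r_add: "r (a + a') - (r a + r a') \<in> N" for a a'
  proof -
    have "fdelta (a + a', 1) - (fdelta (a, 1) + fdelta (a', 1)) \<in> N"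
      using N_R[OF R1[of a a' 1]] by (simp add: algebra_simps)
    then have "cl (fdelta (a + a', 1)) = tadd (cl (fdelta (a, 1))) (cl (fdelta (a', 1)))"
      by (simp add: tadd_cl cl_eqI)
    then have "cl (r (a + a')) = tadd (cl (r a)) (cl (r a'))"
      using der_add[OF dD cl_in_T cl_in_T] rd by (metis fsupp_delta)
    then show ?thesis by (simp add: tadd_cl cl_eq_iff)
  qed
  have r_scale: "r (sA c a) - fscale c (r a) \<in> N" for c a
  proof -
    have "cl (fdelta (sA c a, 1)) = tscale sA sS c (cl (fdelta (a, 1)))"
      using N_R[OF R3[of c a 1]] by (simp add: tscale_cl cl_eqI)
    then have "cl (r (sA c a)) = tscale sA sS c (cl (r a))"
      using der_scale[OF dD cl_in_T] rd by (metis fsupp_delta)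
    then show ?thesis by (simp add: tscale_cl cl_eq_iff)
  qed
  have r_mul: "r (mA a b) - (fmul mA (r a) (fdelta (b, 1)) + fmul mA (fdelta (a, 1)) (r b)) \<in> N" for a b
  proof -
    have "cl (fdelta (mA a b, 1)) = tmul sA mA sS (cl (fdelta (a, 1))) (cl (fdelta (b, 1)))"
      by (simp add: tmul_cl fmul_delta)
    then have "cl (r (mA a b)) = tadd (tmul sA mA sS (cl (r a)) (cl (fdelta (b, 1))))
                                      (tmul sA mA sS (cl (fdelta (a, 1))) (cl (r b)))"
      using der_mul[OF dD cl_in_T cl_in_T] rd by (metis fsupp_delta)
    then show ?thesis by (simp add: tmul_cl rs tadd_cl cl_eq_iff)
  qed
  define \<phi> where "\<phi> = lext (\<lambda>p. fsact (snd p) (r (fst p)))"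
  have \<phi>lin: "flin \<phi>" unfolding \<phi>_def
    by (rule flin_lext) (rule flin_fsupp[OF flin_fsact rs])
  have \<phi>d: "\<phi> (fdelta (a, s)) = fsact s (r a)" for a s
    by (simp add: \<phi>_def lext_delta)
  have \<phi>R: "\<phi> v \<in> N" if v: "v \<in> R" for v
    using v
  proof (cases rule: R_cases)
    case (r1 a a' s)
    have "\<phi> v = fsact s (r (a + a') - (r a + r a'))"
      by (simp add: r1 flin_d3[OF \<phi>lin] \<phi>d flin_diff[OF flin_fsact] flin_add[OF flin_fsact] rs fsupp_add)
    then show ?thesis using fsact_N[OF r_add] by simp
  next
    case (r2 a s s')
    show ?thesis using fsact_add_N[OF rs] by (simp add: r2 flin_d3[OF \<phi>lin] \<phi>d)
  next
    case (r3 c a s)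
    have "\<phi> v = fsact s (r (sA c a) - fscale c (r a))"
      by (simp add: r3 flin_ds[OF \<phi>lin] \<phi>d flin_diff[OF flin_fsact] flin_scale[OF flin_fsact] rs fsupp_scale)
    then show ?thesis using fsact_N[OF r_scale] by simp
  next
    case (r4 c a s)
    show ?thesis using fsact_sS_N[OF rs] by (simp add: r4 flin_ds[OF \<phi>lin] \<phi>d)
  qed
  have \<phi>N: "\<phi> v \<in> N" if "v \<in> N" for v
    using flin_span[OF \<phi>lin R_fsupp, of R v] \<phi>R N_span that by metis
  have \<phi>s: "\<phi> f \<in> fsupp" if "f \<in> fsupp" for f using flin_fsupp[OF \<phi>lin that] .
  have leib: "\<phi> (fmul mA f g) - (fmul mA (\<phi> f) g + fmul mA f (\<phi> g)) \<in> N"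
    if f: "f \<in> fsupp" and g: "g \<in> fsupp" for f g
  proof -
    have L1: "flin (\<lambda>f. \<phi> (fmul mA f g) - (fmul mA (\<phi> f) g + fmul mA f (\<phi> g)))"
      by (intro flin_minus flin_plus flin_comp[OF \<phi>lin] flin_comp[OF flin_fmul_left[OF g]]
          flin_fmul_left g \<phi>s \<phi>lin)
    show ?thesis
    proof (rule flin_memI[OF L1 N_subspace _ f])
      fix p :: "'a \<times> 's" obtain a s where p: "p = (a, s)" by fastforce
      have L2: "flin (\<lambda>g. \<phi> (fmul mA (fdelta p) g) - (fmul mA (\<phi> (fdelta p)) g + fmul mA (fdelta p) (\<phi> g)))"
        by (intro flin_minus flin_plus flin_comp[OF \<phi>lin] flin_comp[OF flin_fmul_right]
          flin_fmul_right fsupp_delta \<phi>s \<phi>lin)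
      show "\<phi> (fmul mA (fdelta p) g) - (fmul mA (\<phi> (fdelta p)) g + fmul mA (fdelta p) (\<phi> g)) \<in> N"
      proof (rule flin_memI[OF L2 N_subspace _ g])
        fix q :: "'a \<times> 's" obtain b t where q: "q = (b, t)" by fastforce
        have "fsact (s * t) (r (mA a b) - (fmul mA (r a) (fdelta (b, 1)) + fmul mA (fdelta (a, 1)) (r b))) \<in> N"
          by (rule fsact_N[OF r_mul])
        moreover have "fsact (s * t) (r (mA a b) - (fmul mA (r a) (fdelta (b, 1)) + fmul mA (fdelta (a, 1)) (r b)))
           = fsact (s * t) (r (mA a b)) - (fmul mA (fsact s (r a)) (fdelta (b, t)) + fmul mA (fdelta (a, s)) (fsact t (r b)))"
          by (simp add: flin_diff[OF flin_fsact] flin_add[OF flin_fsact] rs fsupp_add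
              flin_fsupp[OF flin_fmul_left] flin_fsupp[OF flin_fmul_right] fsact_fmul1 fsact_fmul2)
        ultimately show "\<phi> (fmul mA (fdelta p) (fdelta q)) - (fmul mA (\<phi> (fdelta p)) (fdelta q) + fmul mA (fdelta p) (\<phi> (fdelta q))) \<in> N"
          by (simp add: p q fmul_delta \<phi>d)
      qed
    qed
  qed
  define d1 where "d1 X = cl (\<phi> (SOME f. f \<in> fsupp \<and> X = cl f))" for X
  have d1cl: "d1 (cl f) = cl (\<phi> f)" if f: "f \<in> fsupp" for f
  proof -
    let ?f = "SOME f'. f' \<in> fsupp \<and> cl f = cl f'"
    have "?f \<in> fsupp \<and> cl f = cl ?f" by (rule someI[of _ f]) (simp add: f)
    then have f': "?f \<in> fsupp" "f - ?f \<in> N" by (auto simp: cl_eq_iff)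
    then have "0 - (f - ?f) \<in> N" using N_diff[OF N_zero f'(2)] by blast
    then have "?f - f \<in> N" by simp
    then have "\<phi> ?f - \<phi> f \<in> N" using flin_diff[OF \<phi>lin f'(1) f] \<phi>N by metis
    then show ?thesis unfolding d1_def by (rule cl_eqI)
  qed
  have d1T: "d1 X \<in> T \<and> (\<exists>f\<in>fsupp. X = cl f \<and> d1 X = cl (\<phi> f))" if "X \<in> T" for X
    using that d1cl \<phi>s cl_in_T by (auto simp: T_iff)
  have d1D: "d1 \<in> tens_der sA mA sS"
    unfolding tens_der_def derivations_def
  proof (intro CollectI conjI ballI allI)
    fix X assume "X \<in> T" then show "d1 X \<in> T" using d1T by blast
  next
    fix X Y assume "X \<in> T" "Y \<in> T"
    then obtain f g where fg: "f \<in> fsupp" "g \<in> fsupp" "X = cl f" "Y = cl g" by (auto simp: T_iff)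
    show "d1 (tadd X Y) = tadd (d1 X) (d1 Y)"
      by (simp add: fg tadd_cl d1cl fsupp_add flin_add[OF \<phi>lin])
  next
    fix c X assume "X \<in> T"
    then obtain f where fg: "f \<in> fsupp" "X = cl f" by (auto simp: T_iff)
    show "d1 (tscale sA sS c X) = tscale sA sS c (d1 X)"
      by (simp add: fg tscale_cl d1cl fsupp_scale flin_scale[OF \<phi>lin])
  next
    fix X Y assume "X \<in> T" "Y \<in> T"
    then obtain f g where fg: "f \<in> fsupp" "g \<in> fsupp" "X = cl f" "Y = cl g" by (auto simp: T_iff)
    have "fmul mA f g \<in> fsupp" using flin_fsupp[OF flin_fmul_left[OF fg(2)] fg(1)] .
    then have "d1 (tmul sA mA sS X Y) = cl (\<phi> (fmul mA f g))" by (simp add: fg tmul_cl d1cl)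
    also have "\<dots> = cl (fmul mA (\<phi> f) g + fmul mA f (\<phi> g))" by (rule cl_eqI[OF leib[OF fg(1,2)]])
    also have "\<dots> = tadd (tmul sA mA sS (d1 X) Y) (tmul sA mA sS X (d1 Y))"
      by (simp add: fg d1cl tmul_cl \<phi>s tadd_cl)
    finally show "d1 (tmul sA mA sS X Y) = tadd (tmul sA mA sS (d1 X) Y) (tmul sA mA sS X (d1 Y))" .
  qed
  have d1S: "d1 \<in> tens_der_S sA mA sS"
    unfolding tens_der_S_def
  proof (intro CollectI conjI allI d1D)
    fix a s s'
    show "d1 (tens sA sS a (s * s')) = tsact sA sS s' (d1 (tens sA sS a s))"
      by (simp add: tens_cl d1cl \<phi>d tsact_cl flin_fsupp[OF flin_fsact rs] fsact_fsact[OF rs])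
  qed
  define d2 where "d2 X = tadd (d X) (tscale sA sS (-1) (d1 X))" for X
  have d2cl: "d2 X = cl (g - h)" if "d X = cl g" "d1 X = cl h" for X g h
    using that by (simp add: d2_def tscale_cl tadd_cl fscale_m1)
  have dT: "\<exists>g\<in>fsupp. d X = cl g" if "X \<in> T" for X
    using der_T[OF dD that] by (simp add: T_iff)
  have d2D: "d2 \<in> tens_der sA mA sS"
    unfolding tens_der_def derivations_def
  proof (intro CollectI conjI ballI allI)
    fix X assume X: "X \<in> T"
    obtain g h where "g \<in> fsupp" "h \<in> fsupp" "d X = cl g" "d1 X = cl h"
      using dT[OF X] d1T[OF X] \<phi>s by blast
    then show "d2 X \<in> T" using d2cl cl_in_T fsupp_diff by metis
  next
    fix X Y assume X: "X \<in> T" and Y: "Y \<in> T"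
    obtain gX hX where X': "gX \<in> fsupp" "hX \<in> fsupp" "d X = cl gX" "d1 X = cl hX"
      using dT[OF X] d1T[OF X] \<phi>s by blast
    obtain gY hY where Y': "gY \<in> fsupp" "hY \<in> fsupp" "d Y = cl gY" "d1 Y = cl hY"
      using dT[OF Y] d1T[OF Y] \<phi>s by blast
    have "d (tadd X Y) = cl (gX + gY)" using der_add[OF dD X Y] X' Y' by (simp add: tadd_cl)
    moreover have "d1 (tadd X Y) = cl (hX + hY)"
      using d1D X Y X' Y' unfolding tens_der_def derivations_def by (simp add: tadd_cl)
    ultimately have "d2 (tadd X Y) = cl ((gX + gY) - (hX + hY))" by (rule d2cl)
    also have "\<dots> = tadd (d2 X) (d2 Y)"
      using d2cl[OF X'(3,4)] d2cl[OF Y'(3,4)] by (simp add: tadd_cl algebra_simps)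
    finally show "d2 (tadd X Y) = tadd (d2 X) (d2 Y)" .
  next
    fix c X assume X: "X \<in> T"
    obtain gX hX where X': "gX \<in> fsupp" "hX \<in> fsupp" "d X = cl gX" "d1 X = cl hX"
      using dT[OF X] d1T[OF X] \<phi>s by blast
    have "d (tscale sA sS c X) = cl (fscale c gX)" using der_scale[OF dD X] X' by (simp add: tscale_cl)
    moreover have "d1 (tscale sA sS c X) = cl (fscale c hX)"
      using d1D X X' unfolding tens_der_def derivations_def by (simp add: tscale_cl)
    ultimately have "d2 (tscale sA sS c X) = cl (fscale c gX - fscale c hX)" by (rule d2cl)
    also have "\<dots> = tscale sA sS c (d2 X)"
      using d2cl[OF X'(3,4)] by (simp add: tscale_cl fscale_diff)
    finally show "d2 (tscale sA sS c X) = tscale sA sS c (d2 X)" .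
  next
    fix X Y assume X: "X \<in> T" and Y: "Y \<in> T"
    obtain gX hX where X': "gX \<in> fsupp" "hX \<in> fsupp" "d X = cl gX" "d1 X = cl hX"
      using dT[OF X] d1T[OF X] \<phi>s by blast
    obtain gY hY where Y': "gY \<in> fsupp" "hY \<in> fsupp" "d Y = cl gY" "d1 Y = cl hY"
      using dT[OF Y] d1T[OF Y] \<phi>s by blast
    obtain f g where fg: "f \<in> fsupp" "g \<in> fsupp" "X = cl f" "Y = cl g" using X Y by (auto simp: T_iff)
    have "d (tmul sA mA sS X Y) = cl (fmul mA gX g + fmul mA f gY)"
      using der_mul[OF dD X Y] X' Y' fg by (simp add: tmul_cl tadd_cl)
    moreover have "d1 (tmul sA mA sS X Y) = cl (fmul mA hX g + fmul mA f hY)"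
      using der_mul[OF d1D X Y] X' Y' fg by (simp add: tmul_cl tadd_cl)
    ultimately have "d2 (tmul sA mA sS X Y) = cl ((fmul mA gX g + fmul mA f gY) - (fmul mA hX g + fmul mA f hY))"
      by (rule d2cl)
    also have "(fmul mA gX g + fmul mA f gY) - (fmul mA hX g + fmul mA f hY)
        = fmul mA (gX - hX) g + fmul mA f (gY - hY)"
      using flin_diff[OF flin_fmul_left[OF fg(2)] X'(1,2)] flin_diff[OF flin_fmul_right[OF fg(1)] Y'(1,2)]
      by (simp add: algebra_simps)
    also have "cl \<dots> = tadd (tmul sA mA sS (d2 X) Y) (tmul sA mA sS X (d2 Y))"
      using d2cl[OF X'(3,4)] d2cl[OF Y'(3,4)] fg X' Y' by (simp add: tmul_cl tadd_cl fsupp_diff)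
    finally show "d2 (tmul sA mA sS X Y) = tadd (tmul sA mA sS (d2 X) Y) (tmul sA mA sS X (d2 Y))" .
  qed
  have d2A: "d2 \<in> tens_der_A1 sA mA sS"
    unfolding tens_der_A1_def
  proof (intro CollectI conjI allI d2D)
    fix a
    have "d1 (tens sA sS a 1) = cl (r a)" by (simp add: tens_cl d1cl \<phi>d fsact_one[OF rs])
    then have "d2 (tens sA sS a 1) = cl (r a - r a)" using d2cl rd by (simp add: tens_cl)
    then show "d2 (tens sA sS a 1) = tzero sA sS" by (simp add: tzero_cl)
  qed
  have "d X = tadd (d1 X) (d2 X)" if X: "X \<in> T" for X
  proof -
    obtain g h where "g \<in> fsupp" "h \<in> fsupp" "d X = cl g" "d1 X = cl h"
      using dT[OF X] d1T[OF X] \<phi>s by blast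
    then show ?thesis using d2cl by (simp add: tadd_cl)
  qed
  then show ?thesis using d1S d2A by blast
qed

end

theorem lemma2p1:
  fixes sA :: "'k::field \<Rightarrow> 'a::ab_group_add \<Rightarrow> 'a"
    and mA :: "'a \<Rightarrow> 'a \<Rightarrow> 'a"
    and sS :: "'k \<Rightarrow> 's::comm_ring_1 \<Rightarrow> 's"
  assumes A_vs: "vector_space sA"
    and mA_add_left: "\<And>x y z. mA (x + y) z = mA x z + mA y z"
    and mA_add_right: "\<And>x y z. mA x (y + z) = mA x y + mA x z"
    and mA_scale_left: "\<And>c x y. mA (sA c x) y = sA c (mA x y)"
    and mA_scale_right: "\<And>c x y. mA x (sA c y) = sA c (mA x y)"
    and S_vs: "vector_space sS"
    and S_alg: "\<And>c x y. sS c (x * y) = sS c x * y"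
  shows "(\<forall>d\<in>tens_der sA mA sS. \<exists>d1\<in>tens_der_S sA mA sS. \<exists>d2\<in>tens_der_A1 sA mA sS.
            \<forall>X\<in>tens_carrier sA sS. d X = tadd (d1 X) (d2 X))
       \<and> (\<forall>d\<in>tens_der_S sA mA sS \<inter> tens_der_A1 sA mA sS.
            \<forall>X\<in>tens_carrier sA sS. d X = tzero sA sS)"
proof -
  interpret tsetup sA mA sS
    by unfold_locales (rule assms)+
  show ?thesis using part1 part2 by blast
qed

end
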